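(* Let $\Lambda\subset\mathbb{C}$ be a lattice which is not CM and is isogenous to $\overline{\Lambda}$, and let $\gamma\in\mathbb{C}$ with $\mathrm{Isog}(\Lambda,\overline{\Lambda})=\mathbb{Z}\cdot\gamma$. Let $\mathcal{V}\subset\mathbb{R}^2$ be a weakly bialgebraic set for $\mathcal{P}_\Lambda$ which is not a singleton, let $P\in\mathbb{R}[X,Y]$ be irreducible in $\mathbb{C}[X,Y]$ with real zero locus $\mathcal{V}$, and let $C_P\subset\mathbb{C}^2$ be the complex curve $P=0$. Suppose $f(C_P)=W+\sigma$, where $f(v,w)=(v+iw,v-iw)$, $\sigma\in\mathbb{C}^2$, and $W=\{(x,y)\in\mathbb{C}^2: y=rx\}$ for some $r\in\mathbb{C}$ is a one-dimensional complex subspace generated as an $\mathbb{R}$-vector space by two elements $w_1,w_2\in\Lambda\times\overline{\Lambda}$. Then $\gamma r^{-1}\in\mathbb{Q}$.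
   Context: Identify $\mathbb{R}^2$ with $\mathbb{C}$ via $(x,y)\mapsto x+iy$. For a lattice $\Lambda\subset\mathbb{C}$ let $\wp_\Lambda$ be its Weierstrass $\wp$-function and $\mathcal{P}_\Lambda:\mathbb{R}^2\smallsetminus\Lambda\to\mathbb{R}^2$, $(x,y)\mapsto(\mathrm{Re}\,\wp_\Lambda(x+iy),\mathrm{Im}\,\wp_\Lambda(x+iy))$. A non-empty subset $\mathcal{V}\subsetneq\mathbb{R}^2$ is weakly bialgebraic for $\mathcal{P}_\Lambda$ if (i) there exist algebraic subvarieties $V\subset\mathbb{A}^2_\mathbb{R}$ and $W'\subsetneq\mathbb{A}^2_\mathbb{R}$ with $\mathcal{V}=V(\mathbb{R})$ and $\mathcal{P}_\Lambda(\mathcal{V}\cap(\mathbb{R}^2\smallsetminus\Lambda))\subset W'(\mathbb{R})$; and (ii) $\mathcal{V}$ cannot be written as $V_1(\mathbb{R})\cup V_2(\mathbb{R})$ with $V_i$ algebraic subvarieties and both inclusions $V_i(\mathbb{R})\subset\mathcal{V}$ proper. For lattices $\Lambda_1,\Lambda_2$, $\mathrm{Isog}(\Lambda_1,\Lambda_2)=\{\alpha\in\mathbb{C}:\alpha\Lambda_1\subset\Lambda_2\}$; isogenous means this is non-zero; $\Lambda$ is CM if $\mathrm{Isog}(\Lambda,\Lambda)$ has rank two. $\overline{\Lambda}$ denotes the complex conjugate lattice. *)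

theory Defs
  imports "HOL-Analysis.Analysis" "HOL-Computational_Algebra.Polynomial"
begin

definition is_lattice :: "complex set \<Rightarrow> bool" where
  "is_lattice L \<longleftrightarrow> (\<exists>\<omega>1 \<omega>2. \<omega>1 \<noteq> 0 \<and> Im (\<omega>2 / \<omega>1) \<noteq> 0 \<and>
      L = {of_int m * \<omega>1 + of_int n * \<omega>2 | m n. True})"

definition Isog :: "complex set \<Rightarrow> complex set \<Rightarrow> complex set" where
  "Isog L1 L2 = {\<alpha>. (\<lambda>z. \<alpha> * z) ` L1 \<subseteq> L2}"

definition isogenous :: "complex set \<Rightarrow> complex set \<Rightarrow> bool" where
  "isogenous L1 L2 \<longleftrightarrow> Isog L1 L2 \<noteq> {0}"

definition zrank_two :: "complex set \<Rightarrow> bool" where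
  "zrank_two S \<longleftrightarrow>
     (\<exists>a\<in>S. \<exists>b\<in>S. \<forall>m n :: int. of_int m * a + of_int n * b = 0 \<longrightarrow> m = 0 \<and> n = 0) \<and>
     (\<forall>a\<in>S. \<forall>b\<in>S. \<forall>c\<in>S. \<exists>m n k :: int. (m, n, k) \<noteq> (0, 0, 0) \<and>
          of_int m * a + of_int n * b + of_int k * c = 0)"

definition is_CM :: "complex set \<Rightarrow> bool" where
  "is_CM L \<longleftrightarrow> zrank_two (Isog L L)"

definition wp :: "complex set \<Rightarrow> complex \<Rightarrow> complex" where
  "wp L z = 1 / z\<^sup>2 + (\<Sum>\<^sub>\<infinity>\<omega>\<in>L - {0}. 1 / (z - \<omega>)\<^sup>2 - 1 / \<omega>\<^sup>2)"

definition Pmap :: "complex set \<Rightarrow> real \<times> real \<Rightarrow> real \<times> real" where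
  "Pmap L p = (Re (wp L (Complex (fst p) (snd p))), Im (wp L (Complex (fst p) (snd p))))"

section \<open>Bivariate polynomials (as 'a poly poly: outer variable Y, inner X)\<close>

definition eval2 :: "'a::comm_ring_1 poly poly \<Rightarrow> 'a \<Rightarrow> 'a \<Rightarrow> 'a" where
  "eval2 p x y = poly (poly p [:y:]) x"

definition cpoly2 :: "real poly poly \<Rightarrow> complex poly poly" where
  "cpoly2 p = map_poly (map_poly complex_of_real) p"

definition zero_set2 :: "real poly poly set \<Rightarrow> (real \<times> real) set" where
  "zero_set2 S = {(x, y). \<forall>p\<in>S. eval2 p x y = 0}"

definition real_alg_set :: "(real \<times> real) set \<Rightarrow> bool" where
  "real_alg_set A \<longleftrightarrow> (\<exists>S. finite S \<and> A = zero_set2 S)"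

definition proper_subvariety_points :: "(real \<times> real) set \<Rightarrow> bool" where
  "proper_subvariety_points A \<longleftrightarrow> (\<exists>S. finite S \<and> (\<exists>p\<in>S. p \<noteq> 0) \<and> A = zero_set2 S)"

definition lattice_points_R2 :: "complex set \<Rightarrow> (real \<times> real) set" where
  "lattice_points_R2 L = {p. Complex (fst p) (snd p) \<in> L}"

definition weakly_bialgebraic :: "complex set \<Rightarrow> (real \<times> real) set \<Rightarrow> bool" where
  "weakly_bialgebraic L V \<longleftrightarrow>
     V \<noteq> {} \<and> V \<noteq> UNIV \<and>
     real_alg_set V \<and>
     (\<exists>W'. proper_subvariety_points W' \<and> Pmap L ` (V - lattice_points_R2 L) \<subseteq> W') \<and>
     \<not> (\<exists>V1 V2. real_alg_set V1 \<and> real_alg_set V2 \<and> V1 \<subset> V \<and> V2 \<subset> V \<and> V = V1 \<union> V2)"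

end

theory Submission
  imports Defs
begin

lemma latt_comb:
  assumes L: "L = {of_int m * (u::complex) + of_int n * v | m n. True}"
    and x: "x \<in> L" and y: "y \<in> L"
  shows "of_int p * x + of_int q * y \<in> L"
proof -
  obtain m1 n1 where x': "x = of_int m1 * u + of_int n1 * v" using x L by blast
  obtain m2 n2 where y': "y = of_int m2 * u + of_int n2 * v" using y L by blast
  have "of_int p * x + of_int q * y = of_int (p*m1 + q*m2) * u + of_int (p*n1+q*n2) * v"
    by (simp add: x' y' algebra_simps)
  thus ?thesis using L by blast
qed

lemma imform: "Im (cnj (a*x + b*y) * (c*x + d*y)) = (a*d - b*c) * Im (cnj x * y)"
  if "a \<in> \<real>" "b \<in> \<real>" "c \<in> \<real>" "d \<in> \<real>" for a b c d x y :: complex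
  using that
  by (auto elim!: Reals_cases simp: algebra_simps)

theorem lemma2p6p1:
  fixes L :: "complex set" and \<gamma> r :: complex and V :: "(real \<times> real) set"
    and P :: "real poly poly" and \<sigma> w1 w2 :: "complex \<times> complex"
  assumes "is_lattice L"
    and "\<not> is_CM L"
    and "isogenous L (cnj ` L)"
    and "Isog L (cnj ` L) = {of_int n * \<gamma> | n. True}"
    and "weakly_bialgebraic L V"
    and "\<not> (\<exists>a. V = {a})"
    and "irreducible (cpoly2 P)"
    and "zero_set2 {P} = V"
    and "w1 \<in> L \<times> (cnj ` L)" and "w2 \<in> L \<times> (cnj ` L)"
    and "{(x, r * x) | x. True} = {a *\<^sub>R w1 + b *\<^sub>R w2 | a b. True}"
    and "(\<lambda>(v, w). (v + \<i> * w, v - \<i> * w)) ` {(v, w). eval2 (cpoly2 P) v w = 0}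
           = (\<lambda>z. z + \<sigma>) ` {(x, r * x) | x. True}"
  shows "\<gamma> * inverse r \<in> \<rat>"
proof (cases "r = 0")
  case True thus ?thesis by simp
next
  case rnz: False
  note W = assms(11)
  obtain \<omega>1 \<omega>2 where L: "L = {of_int m * \<omega>1 + of_int n * \<omega>2 | m n. True}"
    using assms(1) unfolding is_lattice_def by blast
  define a1 where "a1 = fst w1"
  define a2 where "a2 = fst w2"
  have a1L: "a1 \<in> L" and a2L: "a2 \<in> L" using assms(9,10) a1_def a2_def by auto
  have "w1 \<in> {a *\<^sub>R w1 + b *\<^sub>R w2 | a b. True}"
    by (rule CollectI, rule exI[of _ 1], rule exI[of _ 0]) simp
  then obtain x1 where "w1 = (x1, r * x1)" using W by blast
  hence sw1: "snd w1 = r * a1" using a1_def by simp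
  have "w2 \<in> {a *\<^sub>R w1 + b *\<^sub>R w2 | a b. True}"
    by (rule CollectI, rule exI[of _ 0], rule exI[of _ 1]) simp
  then obtain x2 where "w2 = (x2, r * x2)" using W by blast
  hence sw2: "snd w2 = r * a2" using a2_def by simp
  have c1: "cnj (r * a1) \<in> L"
  proof -
    obtain x where "x \<in> L" "snd w1 = cnj x" using assms(9) by (auto simp: mem_Times_iff)
    thus ?thesis using sw1 by (metis complex_cnj_cnj)
  qed
  have c2: "cnj (r * a2) \<in> L"
  proof -
    obtain x where "x \<in> L" "snd w2 = cnj x" using assms(10) by (auto simp: mem_Times_iff)
    thus ?thesis using sw2 by (metis complex_cnj_cnj)
  qed
  obtain m1 n1 where a1e: "a1 = of_int m1 * \<omega>1 + of_int n1 * \<omega>2" using a1L L by blast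
  obtain m2 n2 where a2e: "a2 = of_int m2 * \<omega>1 + of_int n2 * \<omega>2" using a2L L by blast
  define D where "D = m1 * n2 - m2 * n1"
  have imD: "Im (cnj a1 * a2) = of_int D * Im (cnj \<omega>1 * \<omega>2)"
    unfolding a1e a2e D_def
    by (simp add: algebra_simps)
  have "(1, r) \<in> {(x, r * x) | x. True}" by auto
  then obtain a b where ab: "(1, r) = a *\<^sub>R w1 + b *\<^sub>R w2" using W by blast
  have "(\<i>, r * \<i>) \<in> {(x, r * x) | x. True}" by auto
  then obtain c d where cd: "(\<i>, r*\<i>) = c *\<^sub>R w1 + d *\<^sub>R w2" using W by blast
  have e1: "1 = of_real a * a1 + of_real b * a2"
    using arg_cong[OF ab, of fst] a1_def a2_def by (simp add: scaleR_conv_of_real)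
  have e2: "\<i> = of_real c * a1 + of_real d * a2"
    using arg_cong[OF cd, of fst] a1_def a2_def by (simp add: scaleR_conv_of_real)
  have "Im (cnj 1 * \<i>) = (a*d - b*c) * Im (cnj a1 * a2)"
    unfolding e1 e2 by (simp add: algebra_simps)
  hence "Im (cnj a1 * a2) \<noteq> 0" by auto
  hence Dnz: "D \<noteq> 0" using imD by auto
  have "of_int D * r \<in> Isog L (cnj ` L)"
    unfolding Isog_def
  proof (clarify)
    fix z assume "z \<in> L"
    then obtain p q where z: "z = of_int p * \<omega>1 + of_int q * \<omega>2" using L by blast
    have "of_int D * r * z = of_int (p*n2 - q*m2) * (r*a1) + of_int (q*m1 - p*n1) * (r*a2)"
      unfolding z a1e a2e D_def by (simp add: algebra_simps)
    hence "cnj (of_int D * r * z) = of_int (p*n2 - q*m2) * cnj (r*a1) + of_int (q*m1 - p*n1) * cnj (r*a2)"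
      by simp
    also have "\<dots> \<in> L" by (rule latt_comb[OF L c1 c2])
    finally have "cnj (of_int D * r * z) \<in> L" .
    hence "cnj (cnj (of_int D * r * z)) \<in> cnj ` L" by blast
    thus "of_int D * r * z \<in> cnj ` L" by simp
  qed
  then obtain k where k: "of_int D * r = of_int k * \<gamma>" using assms(4) by blast
  have knz: "k \<noteq> 0" using k Dnz rnz by auto
  have "\<gamma> * inverse r = of_int D / of_int k"
    using k knz rnz by (simp add: field_simps)
  thus ?thesis by simp
qed

end
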